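(* Let $p$ be a prime, $q$ and $r$ powers of $p$, and $n$ an integer prime to $p$. Let $S^\times=(\mathbb Z/n\mathbb Z)^\times\times\mathbb F_q^\times$, with $\langle r\rangle$ acting by $r\cdot(i,\alpha)=(ri,\alpha^{1/r})$, and let $O^\times$ be the set of orbits. Then (1) $\sum_{o\in O^\times}|o|=|S^\times|=\varphi(n)(q-1)$; (2) $|O^\times|\ll q/\log q$; (3) $\sum_{o\in O^\times}\log|o|\ll q\log\log q/\log q$, where the implied constants depend only on $r$ and $n$ (and $q$ varies over powers of $p$).
   Context: $\varphi$ denotes Euler's totient function. *)

theory Defs
  imports Complex_Main "HOL-Algebra.Ring" "HOL-Number_Theory.Totient"
begin

definition unitsS :: "('a, 'b) ring_scheme \<Rightarrow> nat \<Rightarrow> (nat \<times> 'a) set" where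
  "unitsS F n = {i \<in> {0..<n}. coprime i n} \<times> (carrier F - {\<zero>\<^bsub>F\<^esub>})"

definition rth_root :: "('a, 'b) ring_scheme \<Rightarrow> nat \<Rightarrow> 'a \<Rightarrow> 'a" where
  "rth_root F r \<alpha> = (THE \<beta>. \<beta> \<in> carrier F - {\<zero>\<^bsub>F\<^esub>} \<and> \<beta> [^]\<^bsub>F\<^esub> r = \<alpha>)"

definition act_r :: "('a, 'b) ring_scheme \<Rightarrow> nat \<Rightarrow> nat \<Rightarrow> nat \<times> 'a \<Rightarrow> nat \<times> 'a" where
  "act_r F n r x = ((r * fst x) mod n, rth_root F r (snd x))"

text \<open>Orbit of x under the cyclic group generated by r (on a finite set the
  forward iterates of the generator give the whole orbit).\<close>
definition orbit_r :: "('a, 'b) ring_scheme \<Rightarrow> nat \<Rightarrow> nat \<Rightarrow> nat \<times> 'a \<Rightarrow> (nat \<times> 'a) set" where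
  "orbit_r F n r x = {(act_r F n r ^^ k) x | k. True}"

definition orbits_r :: "('a, 'b) ring_scheme \<Rightarrow> nat \<Rightarrow> nat \<Rightarrow> (nat \<times> 'a) set set" where
  "orbits_r F n r = orbit_r F n r ` unitsS F n"

end

theory Submission imports Defs "HOL-Number_Theory.Number_Theory" "HOL-Algebra.Multiplicative_Group" "HOL-Real_Asymp.Real_Asymp" begin

context field begin

lemma pow_G_closed:
  assumes "x \<in> carrier R - {\<zero>}" shows "x [^] (e::nat) \<in> carrier R - {\<zero>}"
proof -
  interpret G: group "mult_of R" by (rule field_mult_group)
  have "x [^]\<^bsub>mult_of R\<^esub> e \<in> carrier (mult_of R)" using assms by (intro G.nat_pow_closed) simp
  thus ?thesis by (simp add: nat_pow_mult_of)
qed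

lemma pow_qm1:
  assumes fin: "finite (carrier R)" and x: "x \<in> carrier R - {\<zero>}"
  shows "x [^] (card (carrier R) - 1) = \<one>"
proof -
  interpret G: group "mult_of R" by (rule field_mult_group)
  have "x [^]\<^bsub>mult_of R\<^esub> order (mult_of R) = \<one>\<^bsub>mult_of R\<^esub>"
    using x by (intro G.pow_order_eq_1) simp
  thus ?thesis using order_mult_of[OF fin] by (simp add: nat_pow_mult_of order_def)
qed

lemma pow_cong_one:
  assumes fin: "finite (carrier R)" and x: "x \<in> carrier R - {\<zero>}"
    and E: "E \<ge> 1" and c: "[E = 1] (mod (card (carrier R) - 1))"
  shows "x [^] E = x"
proof -
  have "(card (carrier R) - 1) dvd (E - 1)" using c E by (simp add: cong_altdef_nat)
  then obtain a where a: "E - 1 = (card (carrier R) - 1) * a" by (auto elim: dvdE)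
  have xc: "x \<in> carrier R" using x by simp
  have "x [^] E = x [^] ((card (carrier R) - 1) * a) \<otimes> x"
  proof -
    have "E = Suc ((card (carrier R) - 1) * a)" using E a by simp
    thus ?thesis using xc nat_pow_Suc by metis
  qed
  also have "\<dots> = (x [^] (card (carrier R) - 1)) [^] a \<otimes> x" using xc by (simp add: nat_pow_pow)
  also have "\<dots> = x" using pow_qm1[OF fin x] xc by simp
  finally show ?thesis .
qed

end

locale orb_setup = field R for R :: "('a,'b) ring_scheme" (structure) +
  fixes p m k n r :: nat
  assumes prime_p: "prime p" and fin: "finite (carrier R)" and card_q: "card (carrier R) = p ^ m"
    and m1: "m \<ge> 1" and k1: "k \<ge> 1" and n1: "n \<ge> 1" and cop: "coprime n p"
    and r_def: "r = p ^ k"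
begin

abbreviation "G \<equiv> carrier R - {\<zero>}"
abbreviation "T \<equiv> act_r R n r"
abbreviation "S \<equiv> unitsS R n"
abbreviation "s \<equiv> r ^ (m - 1)"
abbreviation "N \<equiv> m * totient n"

lemma p2: "p \<ge> 2" using prime_p by (simp add: prime_ge_2_nat)
lemma r2: "r \<ge> 2"
proof -
  have "p ^ 1 \<le> p ^ k" using k1 p2 by (intro power_increasing) auto
  thus ?thesis using p2 r_def by simp
qed

lemma rm_cong: "[r ^ m = 1] (mod (card (carrier R) - 1))"
proof -
  have "[p ^ m = 1] (mod (p ^ m - 1))" using p2 by (simp add: cong_altdef_nat)
  hence "[(p ^ m) ^ k = 1 ^ k] (mod (p ^ m - 1))" by (rule cong_pow)
  thus ?thesis by (simp add: card_q r_def power_mult[symmetric] mult.commute)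
qed

lemma rm_pow_cong: "[(r ^ m) ^ c = 1] (mod (card (carrier R) - 1))"
  using cong_pow[OF rm_cong, of c] by simp

lemma sr: "s * r = r ^ m"
proof -
  have "Suc (m - 1) = m" using m1 by simp
  hence "r ^ m = r ^ (m - 1) * r" using power_Suc2[of r "m - 1"] by simp
  thus ?thesis by simp
qed

lemma root_eq:
  assumes a: "a \<in> G" shows "rth_root R r a = a [^] s"
  unfolding rth_root_def
proof (rule the_equality)
  have "(a [^] s) [^] r = a [^] (r ^ m)" using a sr by (simp add: nat_pow_pow)
  also have "\<dots> = a" using pow_cong_one[OF fin a _ rm_cong] r2 by simp
  finally show "a [^] s \<in> G \<and> (a [^] s) [^] r = a" using pow_G_closed[OF a] by simp
next
  fix b assume b: "b \<in> G \<and> b [^] r = a"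
  have "b = b [^] (r ^ m)" using pow_cong_one[OF fin _ _ rm_cong, of b] b r2 by simp
  also have "\<dots> = (b [^] r) [^] s"
  proof -
    have "(b [^] r) [^] s = b [^] (r * s)" using b by (intro nat_pow_pow) simp
    moreover have "r * s = r ^ m" by (subst mult.commute) (rule sr)
    ultimately show ?thesis by simp
  qed
  finally show "b = a [^] s" using b by simp
qed

lemma cop_rn: "coprime r n" using cop r_def by (simp add: coprime_commute)

lemma T_pow:
  assumes x: "x \<in> S"
  shows "(T ^^ j) x = ((r ^ j * fst x) mod n, snd x [^] (s ^ j))"
proof (induction j)
  case 0
  have "fst x < n" using x by (auto simp: unitsS_def)
  moreover have "snd x \<in> carrier R" using x by (auto simp: unitsS_def)
  ultimately show ?case by (simp add: prod_eq_iff)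
next
  case (Suc j)
  have a: "snd x \<in> G" using x by (auto simp: unitsS_def)
  have "(T ^^ Suc j) x = T ((r ^ j * fst x) mod n, snd x [^] (s ^ j))" using Suc by simp
  also have "\<dots> = ((r * ((r ^ j * fst x) mod n)) mod n, rth_root R r (snd x [^] (s ^ j)))"
    by (simp add: act_r_def)
  also have "\<dots> = ((r ^ Suc j * fst x) mod n, snd x [^] (s ^ Suc j))"
  proof -
    have "(r * ((r ^ j * fst x) mod n)) mod n = (r ^ Suc j * fst x) mod n"
      by (simp add: mod_mult_right_eq mult.assoc)
    moreover have "rth_root R r (snd x [^] (s ^ j)) = snd x [^] (s ^ Suc j)"
      using root_eq[OF pow_G_closed[OF a]] a by (simp add: nat_pow_pow mult.commute)
    ultimately show ?thesis by simp
  qed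
  finally show ?case .
qed

lemma T_pow_S:
  assumes x: "x \<in> S" shows "(T ^^ j) x \<in> S"
proof -
  have i: "coprime (fst x) n" and a: "snd x \<in> G" using x by (auto simp: unitsS_def)
  have "coprime (r ^ j * fst x) n" using i cop_rn by simp
  hence "coprime ((r ^ j * fst x) mod n) n" using n1 by (simp add: coprime_commute)
  moreover have "(r ^ j * fst x) mod n < n" using n1 by simp
  ultimately show ?thesis unfolding T_pow[OF x] unitsS_def using pow_G_closed[OF a] by auto
qed


lemma N_pos: "N \<ge> 1"
proof -
  have "totient n > 0" using n1 by simp
  thus ?thesis using m1 by (simp add: Suc_le_eq)
qed

lemma T_N: assumes x: "x \<in> S" shows "(T ^^ N) x = x"
proof -
  have i: "fst x < n" and a: "snd x \<in> G" using x by (auto simp: unitsS_def)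
  have "[r ^ totient n = 1] (mod n)" by (rule euler_theorem[OF cop_rn])
  hence "[(r ^ totient n) ^ m = 1 ^ m] (mod n)" by (rule cong_pow)
  hence "[r ^ N = 1] (mod n)" by (simp add: power_mult[symmetric] mult.commute)
  hence c1: "[r ^ N * fst x = 1 * fst x] (mod n)" by (intro cong_mult) auto
  have "(r ^ N * fst x) mod n = (1 * fst x) mod n" using c1 unfolding Cong.unique_euclidean_semiring_class.cong_def .
  hence f: "(r ^ N * fst x) mod n = fst x" using i by simp
  have "s ^ N = (r ^ m) ^ ((m - 1) * totient n)"
    by (simp add: power_mult[symmetric] ac_simps)
  hence c: "[s ^ N = 1] (mod (card (carrier R) - 1))" using rm_pow_cong by simp
  have "s ^ N \<ge> 1" using r2 by simp
  hence "snd x [^] (s ^ N) = snd x" using pow_cong_one[OF fin a _ c] by simp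
  thus ?thesis using T_pow[OF x, of N] f by (simp add: prod_eq_iff)
qed

lemma T_Nc: assumes x: "x \<in> S" shows "(T ^^ (N * c)) x = x"
proof (induction c)
  case 0 then show ?case by simp
next
  case (Suc c)
  have "(T ^^ (N * Suc c)) x = (T ^^ N) ((T ^^ (N * c)) x)" by (simp add: funpow_add)
  then show ?case using Suc T_N[OF x] by simp
qed

lemma T_mod: assumes x: "x \<in> S" shows "(T ^^ j) x = (T ^^ (j mod N)) x"
proof -
  have "j = j mod N + N * (j div N)" by simp
  hence "(T ^^ j) x = (T ^^ (j mod N)) ((T ^^ (N * (j div N))) x)"
    by (metis comp_apply funpow_add)
  thus ?thesis using T_Nc[OF x] by simp
qed

abbreviation "orb \<equiv> orbit_r R n r"
abbreviation "Orbs \<equiv> orbits_r R n r"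

lemma orbit_eq: assumes x: "x \<in> S" shows "orb x = (\<lambda>j. (T ^^ j) x) ` {..<N}"
proof
  show "orb x \<subseteq> (\<lambda>j. (T ^^ j) x) ` {..<N}"
  proof
    fix y assume "y \<in> orb x"
    then obtain j where y: "y = (T ^^ j) x" by (auto simp: orbit_r_def)
    have "N > 0" using N_pos by linarith
    hence "j mod N < N" by (rule mod_less_divisor)
    thus "y \<in> (\<lambda>j. (T ^^ j) x) ` {..<N}" using y T_mod[OF x, of j] by auto
  qed
  show "(\<lambda>j. (T ^^ j) x) ` {..<N} \<subseteq> orb x" by (auto simp: orbit_r_def)
qed

lemma orbit_fin: "x \<in> S \<Longrightarrow> finite (orb x)" using orbit_eq by simp

lemma orbit_card_le: "x \<in> S \<Longrightarrow> card (orb x) \<le> N"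
  using orbit_eq card_image_le[of "{..<N}"] by fastforce

lemma orbit_sub: "x \<in> S \<Longrightarrow> orb x \<subseteq> S"
  unfolding orbit_r_def using T_pow_S by blast

lemma orbit_self: "x \<in> orb x"
  unfolding orbit_r_def by (rule CollectI, rule exI[of _ 0]) simp

lemma orbit_card_ge: "x \<in> S \<Longrightarrow> card (orb x) \<ge> 1"
  using orbit_fin orbit_self by (metis One_nat_def Suc_leI card_gt_0_iff empty_iff)

lemma orbit_same:
  assumes x: "x \<in> S" and y: "y \<in> orb x" shows "orb y = orb x"
proof -
  obtain a where a: "a < N" "y = (T ^^ a) x" using y orbit_eq[OF x] by auto
  show ?thesis
  proof
    show "orb y \<subseteq> orb x"
    proof
      fix z assume "z \<in> orb y"
      then obtain b where "z = (T ^^ b) y" by (auto simp: orbit_r_def)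
      hence "z = (T ^^ (b + a)) x" using a by (simp add: funpow_add)
      thus "z \<in> orb x" by (auto simp: orbit_r_def)
    qed
    show "orb x \<subseteq> orb y"
    proof
      fix z assume "z \<in> orb x"
      then obtain c where c: "z = (T ^^ c) x" by (auto simp: orbit_r_def)
      have e1: "(T ^^ (c + (N - a))) y = (T ^^ (c + (N - a) + a)) x" using a(2) by (simp only: funpow_add comp_apply)
      have e2: "c + (N - a) + a = c + N" using a by simp
      have e3: "(T ^^ (c + N)) x = (T ^^ c) ((T ^^ N) x)" by (simp only: funpow_add comp_apply)
      have "z = (T ^^ (c + (N - a))) y" using c T_N[OF x] e1 e2 e3 by simp
      thus "z \<in> orb y" by (auto simp: orbit_r_def)
    qed
  qed
qed

lemma Union_O: "\<Union> Orbs = S"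
  using orbit_sub orbit_self unfolding orbits_r_def by blast

lemma disj_O: "pairwise disjnt Orbs"
  unfolding pairwise_def orbits_r_def
proof (intro ballI impI)
  fix o1 o2 assume h: "o1 \<in> orb ` S" "o2 \<in> orb ` S" "o1 \<noteq> o2"
  obtain x where x: "x \<in> S" "o1 = orb x" using h(1) by blast
  obtain y where y: "y \<in> S" "o2 = orb y" using h(2) by blast
  have xy: "x \<in> S" "y \<in> S" "o1 = orb x" "o2 = orb y" "orb x \<noteq> orb y" using x y h(3) by auto
  show "disjnt o1 o2"
  proof (rule ccontr)
    assume "\<not> disjnt o1 o2"
    then obtain z where z: "z \<in> orb x" "z \<in> orb y" using xy unfolding disjnt_def by blast
    have "orb z = orb x" by (rule orbit_same[OF xy(1) z(1)])
    moreover have "orb z = orb y" by (rule orbit_same[OF xy(2) z(2)])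
    ultimately show False using xy(5) by simp
  qed
qed

lemma fin_S: "finite S"
  unfolding unitsS_def using fin by simp

lemma fin_O: "finite Orbs"
  unfolding orbits_r_def using fin_S by simp

lemma part1: "sum card Orbs = card S"
proof -
  have "card (\<Union> Orbs) = sum card Orbs"
    by (rule card_Union_disjoint[OF disj_O]) (auto simp: orbits_r_def orbit_fin)
  thus ?thesis using Union_O by simp
qed

lemma card_units: "card {i \<in> {0..<n}. coprime i n} = totient n"
proof (cases "n = 1")
  case True
  then show ?thesis by (simp add: totient_def)
next
  case False
  hence n2: "n \<ge> 2" using n1 by simp
  have nc0: "\<not> coprime 0 n" and ncn: "\<not> coprime n n" using n2 by auto
  have "{i \<in> {0..<n}. coprime i n} = totatives n"
    apply (auto simp: totatives_def)
    subgoal for x using nc0 by (cases "x = 0") auto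
    subgoal for x using ncn by (cases "x = n") auto
    done
  thus ?thesis by (simp add: totient_def)
qed

lemma card_S: "card S = totient n * (card (carrier R) - 1)"
proof -
  have "card G = card (carrier R) - 1" using fin by (simp add: card_Diff_singleton)
  moreover have "card S = card {i \<in> {0..<n}. coprime i n} * card G"
    unfolding unitsS_def by (rule card_cartesian_product)
  ultimately show ?thesis using card_units by simp
qed


lemma small_orbit:
  assumes x: "x \<in> S" and c: "card (orb x) < L"
  shows "\<exists>j\<in>{1..<L}. snd x [^] (r ^ j - 1) = \<one>"
proof -
  let ?f = "\<lambda>j. (T ^^ j) x"
  have sub: "?f ` {..<L} \<subseteq> orb x" by (auto simp: orbit_r_def)
  have "\<not> inj_on ?f {..<L}"
  proof
    assume "inj_on ?f {..<L}"
    hence "card (?f ` {..<L}) = L" by (simp add: card_image)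
    moreover have "card (?f ` {..<L}) \<le> card (orb x)" by (rule card_mono[OF orbit_fin[OF x] sub])
    ultimately show False using c by simp
  qed
  then obtain a0 b0 where ab0: "a0 < L" "b0 < L" "a0 \<noteq> b0" "?f a0 = ?f b0"
    unfolding inj_on_def by auto
  define a where "a = min a0 b0"
  define b where "b = max a0 b0"
  have ab: "a < b" "b < L" "?f a = ?f b" using ab0 unfolding a_def b_def
    by (auto simp: min_def max_def)
  define j where "j = b - a"
  have j: "j \<in> {1..<L}" using ab unfolding j_def by auto
  have "1 * b \<le> N * b" using N_pos by (rule mult_le_mono1)
  hence Nb: "N * b \<ge> a" using ab(1) by linarith
  have "(T ^^ (N * b - a)) (?f a) = (T ^^ (N * b - a + a)) x" by (simp only: funpow_add comp_apply)
  also have "N * b - a + a = N * b" using Nb by simp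
  finally have e1: "(T ^^ (N * b - a)) (?f a) = x" using T_Nc[OF x, of b] by simp
  have "(T ^^ (N * b - a)) (?f b) = (T ^^ (N * b - a + b)) x" by (simp only: funpow_add comp_apply)
  also have "N * b - a + b = j + N * b" using Nb ab unfolding j_def by simp
  also have "(T ^^ (j + N * b)) x = (T ^^ j) ((T ^^ (N * b)) x)" by (simp only: funpow_add comp_apply)
  finally have e2: "(T ^^ (N * b - a)) (?f b) = (T ^^ j) x" using T_Nc[OF x, of b] by simp
  have Tj: "(T ^^ j) x = x" using e1 e2 ab(3) by simp
  have al: "snd x \<in> G" using x by (auto simp: unitsS_def)
  hence alc: "snd x \<in> carrier R" by simp
  have sj: "snd x [^] (s ^ j) = snd x" using T_pow[OF x, of j] Tj by (metis snd_conv)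
  have "snd x [^] (r ^ j) = (snd x [^] (s ^ j)) [^] (r ^ j)" using sj by simp
  also have "\<dots> = snd x [^] (s ^ j * r ^ j)" using alc by (rule nat_pow_pow)
  also have "s ^ j * r ^ j = (r ^ m) ^ j" by (metis power_mult_distrib sr)
  also have "snd x [^] ((r ^ m) ^ j) = snd x"
    using pow_cong_one[OF fin al _ rm_pow_cong[of j]] r2 by simp
  finally have rj: "snd x [^] (r ^ j) = snd x" .
  have "r ^ j = Suc (r ^ j - 1)" using r2 by simp
  hence "snd x [^] (r ^ j - 1) \<otimes> snd x = snd x [^] (r ^ j)" using alc by (metis nat_pow_Suc)
  also have "\<dots> = \<one> \<otimes> snd x" using rj alc by simp
  finally have "snd x [^] (r ^ j - 1) = \<one>"
    using m_rcancel[of "snd x" "snd x [^] (r ^ j - 1)" \<one>] al alc by simp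
  thus ?thesis using j by blast
qed

lemma card_small: "card {x \<in> S. card (orb x) < L} \<le> totient n * (L * r ^ L)"
proof -
  let ?U = "{i \<in> {0..<n}. coprime i n}"
  let ?V = "\<Union>j\<in>{1..<L}. {a \<in> carrier R. a [^] (r ^ j - 1) = \<one>}"
  have sub: "{x \<in> S. card (orb x) < L} \<subseteq> ?U \<times> ?V"
  proof
    fix x assume x: "x \<in> {x \<in> S. card (orb x) < L}"
    then obtain j where "j \<in> {1..<L}" "snd x [^] (r ^ j - 1) = \<one>" using small_orbit by blast
    moreover have "fst x \<in> ?U" "snd x \<in> carrier R" using x by (auto simp: unitsS_def)
    ultimately show "x \<in> ?U \<times> ?V" by (cases x) auto
  qed
  have finV: "finite ?V" using fin by auto
  have "card ({x \<in> S. card (orb x) < L}) \<le> card (?U \<times> ?V)"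
    by (rule card_mono[OF _ sub]) (use finV in simp)
  also have "\<dots> = card ?U * card ?V" by (rule card_cartesian_product)
  also have "card ?V \<le> (\<Sum>j\<in>{1..<L}. card {a \<in> carrier R. a [^] (r ^ j - 1) = \<one>})"
    by (rule card_UN_le) simp
  also have "\<dots> \<le> (\<Sum>j\<in>{1..<L}. r ^ L)"
  proof (rule sum_mono)
    fix j assume j: "j \<in> {1..<L}"
    have "r ^ j \<ge> r ^ 1" using j r2 by (intro power_increasing) auto
    hence "r ^ j - 1 \<noteq> 0" using r2 by simp
    hence "card {a \<in> carrier R. a [^] (r ^ j - 1) = \<one>} \<le> r ^ j - 1"
      by (rule num_roots_le_deg[OF fin])
    also have "r ^ j \<le> r ^ L" using j r2 by (intro power_increasing) auto
    hence "r ^ j - 1 \<le> r ^ L" by simp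
    finally show "card {a \<in> carrier R. a [^] (r ^ j - 1) = \<one>} \<le> r ^ L" .
  qed
  also have "\<dots> \<le> L * r ^ L" by simp
  finally show ?thesis using card_units by (simp add: mult_le_mono2)
qed

lemma count_bound:
  "L * card Orbs \<le> card S + L * card {x \<in> S. card (orb x) < L}"
proof -
  let ?B = "{x \<in> S. card (orb x) < L}"
  let ?Big = "{ob \<in> Orbs. L \<le> card ob}"
  have sub: "Orbs \<subseteq> ?Big \<union> orb ` ?B" unfolding orbits_r_def by auto
  have "card Orbs \<le> card (?Big \<union> orb ` ?B)"
    by (rule card_mono[OF _ sub]) (use fin_O fin_S in simp)
  also have "\<dots> \<le> card ?Big + card (orb ` ?B)" by (rule card_Un_le)
  also have "card (orb ` ?B) \<le> card ?B" by (rule card_image_le) (use fin_S in simp)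
  finally have c1: "card Orbs \<le> card ?Big + card ?B" by simp
  have "card ?Big * L \<le> sum card ?Big" using sum_bounded_below[of ?Big L card] by simp
  also have "\<dots> \<le> sum card Orbs" by (rule sum_mono2[OF fin_O]) auto
  also have "\<dots> = card S" by (rule part1)
  finally have c2: "card ?Big * L \<le> card S" .
  have "L * card Orbs \<le> L * (card ?Big + card ?B)" using c1 by (rule mult_le_mono2)
  hence "L * card Orbs \<le> L * card ?Big + L * card ?B" by (simp add: add_mult_distrib2)
  thus ?thesis using c2 by (simp add: mult.commute)
qed


lemma card_S_le: "card S \<le> totient n * p ^ m"
  using card_S card_q by simp

lemma orbs_le_S: "card Orbs \<le> card S"
  unfolding orbits_r_def by (rule card_image_le[OF fin_S])

lemma nat_bound:
  assumes M: "\<forall>m'\<ge>M. m' ^ 4 \<le> (2::nat) ^ m'"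
  shows "m * card Orbs \<le> (8 * k + M + 16 + 4 * k) * totient n * p ^ m"
proof (cases "m < M + 16 + 4 * k")
  case True
  have "m * card Orbs \<le> (M + 16 + 4 * k) * (totient n * p ^ m)"
    using True orbs_le_S card_S_le by (intro mult_le_mono) auto
  also have "\<dots> \<le> (8 * k + M + 16 + 4 * k) * (totient n * p ^ m)" by (intro mult_le_mono) auto
  finally show ?thesis by (simp add: mult.assoc)
next
  case False
  define K where "K = 2 * k"
  define L where "L = m div K"
  have K1: "K \<ge> 2" using k1 unfolding K_def by simp
  have mK: "m = K * L + m mod K" unfolding L_def by simp
  have mmod: "m mod K < K" using K1 by simp
  have "m \<ge> K * 2" using False unfolding K_def by simp
  hence "m div K \<ge> 2" using K1 by (metis div_le_mono nonzero_mult_div_cancel_left not_numeral_le_zero le_0_eq)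
  hence L1: "L \<ge> 1" unfolding L_def by simp
  have "K \<le> K * L" using L1 by simp
  hence mle: "m \<le> 2 * (K * L)" using mK mmod by linarith
  have KLm: "K * L \<le> m" using mK by linarith
  have Lm: "L \<le> m" using KLm K1 by (metis le_trans mult_le_mono1 mult_1 one_le_numeral order.trans le_add2 add_leE)
  have "(r ^ L) ^ 2 = p ^ (K * L)" unfolding r_def K_def by (simp add: power_mult[symmetric] ac_simps)
  also have "\<dots> \<le> p ^ m" using KLm p2 by (intro power_increasing) auto
  finally have rL: "(r ^ L) ^ 2 \<le> p ^ m" .
  have "m ^ 4 \<le> 2 ^ m" using M False by simp
  also have "(2::nat) ^ m \<le> p ^ m" using p2 by (intro power_mono) auto
  finally have m4: "m ^ 4 \<le> p ^ m" .
  have "(m ^ 2 * r ^ L) ^ 2 = m ^ 4 * (r ^ L) ^ 2" by (simp add: power_mult_distrib power_mult[symmetric])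
  also have "\<dots> \<le> p ^ m * p ^ m" using m4 rL by (rule mult_le_mono)
  also have "\<dots> = (p ^ m) ^ 2" by (simp add: power2_eq_square)
  finally have "m ^ 2 * r ^ L \<le> p ^ m" by (rule power2_le_imp_le) simp
  moreover have "L * L \<le> m ^ 2" using Lm by (simp add: power2_eq_square mult_le_mono)
  ultimately have LLr: "L * (L * r ^ L) \<le> p ^ m"
    by (metis mult.assoc mult_le_mono1 order.trans)
  have "L * card Orbs \<le> card S + L * card {x \<in> S. card (orb x) < L}" by (rule count_bound)
  also have "\<dots> \<le> totient n * p ^ m + L * (totient n * (L * r ^ L))"
    using card_S_le card_small by (intro add_mono mult_le_mono2) auto
  also have "L * (totient n * (L * r ^ L)) = totient n * (L * (L * r ^ L))" by simp
  also have "\<dots> \<le> totient n * p ^ m" using LLr by (rule mult_le_mono2)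
  finally have LO: "L * card Orbs \<le> 2 * (totient n * p ^ m)" by simp
  have "m * card Orbs \<le> 2 * (K * L) * card Orbs" using mle by (rule mult_le_mono1)
  also have "\<dots> = 2 * K * (L * card Orbs)" by simp
  also have "\<dots> \<le> 2 * K * (2 * (totient n * p ^ m))" using LO by (rule mult_le_mono2)
  also have "\<dots> = (8 * k) * totient n * p ^ m" unfolding K_def by simp
  also have "\<dots> \<le> (8 * k + M + 16 + 4 * k) * totient n * p ^ m" by (intro mult_le_mono) auto
  finally show ?thesis .
qed

end

lemma exp1_lt3: "exp (1::real) < 3"
proof -
  have "exp (1/4::real) \<le> 1 + 1/4 + (1/4)^2" using exp_bound[of "1/4"] by simp
  hence "exp (1/4::real) ^ 4 \<le> (1 + 1/4 + (1/4)^2) ^ 4" by (intro power_mono) auto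
  moreover have "exp (1/4::real) ^ 4 = exp 1" by (subst exp_of_nat_mult[symmetric]) simp
  moreover have "(1 + 1/4 + (1/4)^2) ^ 4 < (3::real)" by (simp add: power_numeral_reduce)
  ultimately show ?thesis by simp
qed

lemma lnln3_pos: "ln (ln (3::real)) > 0"
proof -
  have "ln (exp 1) < ln (3::real)" using exp1_lt3 by (subst ln_less_cancel_iff) auto
  thus ?thesis by simp
qed

lemma nat_M: "\<exists>M. \<forall>m'\<ge>M. m' ^ 4 \<le> (2::nat) ^ m'"
proof -
  have "eventually (\<lambda>m::nat. real m ^ 4 \<le> 2 ^ m) at_top" by real_asymp
  then obtain M where M: "\<forall>m'\<ge>M. real m' ^ 4 \<le> 2 ^ m'" by (auto simp: eventually_at_top_linorder)
  have "\<forall>m'\<ge>M. m' ^ 4 \<le> (2::nat) ^ m'"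
  proof (intro allI impI)
    fix m' :: nat assume "m' \<ge> M"
    hence "real (m' ^ 4) \<le> real (2 ^ m')" using M by simp
    thus "m' ^ 4 \<le> 2 ^ m'" by (simp only: of_nat_le_iff)
  qed
  thus ?thesis by blast
qed

theorem lemma11p3:
  fixes p r n :: nat
  assumes "prime p" and "\<exists>k\<ge>1. r = p ^ k" and "n \<ge> 1" and "coprime n p"
  shows "\<exists>C::real. C > 0 \<and>
    (\<forall>(F :: nat ring) q. field F \<longrightarrow> finite (carrier F) \<longrightarrow>
       card (carrier F) = q \<longrightarrow> (\<exists>m\<ge>1. q = p ^ m) \<longrightarrow> q \<ge> 3 \<longrightarrow>
       sum card (orbits_r F n r) = card (unitsS F n) \<and>
       card (unitsS F n) = totient n * (q - 1) \<and>
       real (card (orbits_r F n r)) \<le> C * real q / ln (real q) \<and>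
       sum (\<lambda>orb. ln (real (card orb))) (orbits_r F n r)
          \<le> C * real q * ln (ln (real q)) / ln (real q))"
proof -
  obtain k where k: "k \<ge> 1" "r = p ^ k" using assms(2) by blast
  obtain M where M: "\<forall>m'\<ge>M. m' ^ 4 \<le> (2::nat) ^ m'" using nat_M by blast
  define Cn where "Cn = (8 * k + M + 16 + 4 * k) * totient n"
  define A where "A = \<bar>ln (real (totient n)) - ln (ln (real p))\<bar>"
  define c0 where "c0 = ln (ln (3::real))"
  define C where "C = real Cn * ln (real p) * (1 + A / c0)"
  have p2: "p \<ge> 2" using assms(1) by (simp add: prime_ge_2_nat)
  have lnp: "ln (real p) > 0" using p2 by simp
  have c0: "c0 > 0" unfolding c0_def by (rule lnln3_pos)
  have A0: "A \<ge> 0" unfolding A_def by simp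
  have fac: "1 + A / c0 \<ge> 1" using A0 c0 by simp
  have tot: "totient n \<ge> 1" using assms(3) by (simp add: Suc_le_eq)
  have Cn: "Cn \<ge> 1" unfolding Cn_def using tot by simp
  have Cpos: "C > 0" unfolding C_def using Cn lnp fac by (intro mult_pos_pos) auto
  show ?thesis
  proof (intro exI[of _ C] conjI Cpos allI impI)
    fix F :: "nat ring" and q
    assume F: "field F" and fin: "finite (carrier F)" and cq: "card (carrier F) = q"
      and qm: "\<exists>m\<ge>1. q = p ^ m" and q3: "q \<ge> 3"
    obtain m where m: "m \<ge> 1" "q = p ^ m" using qm by blast
    interpret O: orb_setup F p m k n r
      using F fin cq m k assms by (intro orb_setup.intro orb_setup_axioms.intro) (auto simp: field_def)
    show "sum card (orbits_r F n r) = card (unitsS F n)" by (rule O.part1)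
    show "card (unitsS F n) = totient n * (q - 1)" using O.card_S cq by simp
    have nb: "m * card (orbits_r F n r) \<le> Cn * q" using O.nat_bound[OF M] m unfolding Cn_def by simp
    have lnq: "ln (real q) = real m * ln (real p)" using m p2 by (simp add: ln_realpow)
    have lnq0: "ln (real q) > 0" using q3 by simp
    have mpos: "real m > 0" using m by simp
    have "real m * real (card (orbits_r F n r)) \<le> real Cn * real q"
      using nb by (metis of_nat_le_iff of_nat_mult)
    hence "real (card (orbits_r F n r)) \<le> real Cn * real q / real m"
      using mpos by (simp add: field_simps)
    also have "\<dots> = real Cn * ln (real p) * real q / ln (real q)"
      using lnq lnp mpos by (simp add: field_simps)
    finally have cO: "real (card (orbits_r F n r)) \<le> real Cn * ln (real p) * real q / ln (real q)" .
    have qpos: "real q / ln (real q) > 0" using lnq0 q3 by simp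
    have "real Cn * ln (real p) * real q / ln (real q) \<le> C * real q / ln (real q)"
    proof -
      have "real Cn * ln (real p) * 1 \<le> real Cn * ln (real p) * (1 + A / c0)"
        using fac lnp Cn by (intro mult_left_mono) auto
      hence "real Cn * ln (real p) * (real q / ln (real q)) \<le> C * (real q / ln (real q))"
        unfolding C_def using qpos by (intro mult_right_mono) auto
      thus ?thesis by simp
    qed
    with cO show "real (card (orbits_r F n r)) \<le> C * real q / ln (real q)" by linarith
    let ?N = "m * totient n"
    have lnN: "ln (real ?N) = ln (ln (real q)) + (ln (real (totient n)) - ln (ln (real p)))"
    proof -
      have "ln (real ?N) = ln (real m * real (totient n))" by (simp only: of_nat_mult)
      also have "\<dots> = ln (real m) + ln (real (totient n))" using mpos tot assms(3) by (intro ln_mult_pos) auto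
      moreover have "real m = ln (real q) / ln (real p)" using lnq lnp by simp
      moreover have "ln (ln (real q) / ln (real p)) = ln (ln (real q)) - ln (ln (real p))"
        using lnq0 lnp by (simp add: ln_div)
      ultimately show ?thesis by simp
    qed
    have llq: "ln (ln (real q)) \<ge> c0"
    proof -
      have "ln (3::real) \<le> ln (real q)" using q3 by simp
      moreover have "ln (3::real) > 0" by simp
      ultimately show ?thesis unfolding c0_def using lnq0 by (subst ln_le_cancel_iff) auto
    qed
    have "A = A / c0 * c0" using c0 by simp
    also have "\<dots> \<le> A / c0 * ln (ln (real q))" using llq A0 c0 by (intro mult_left_mono) auto
    finally have "ln (real ?N) \<le> (1 + A / c0) * ln (ln (real q))" using lnN unfolding A_def
      by (simp add: algebra_simps)
    hence lnNb: "ln (real ?N) \<le> (1 + A / c0) * ln (ln (real q))" .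
    have "1 * 1 \<le> ?N" using m(1) tot by (rule mult_le_mono)
    hence "real ?N \<ge> 1" by linarith
    hence lnN0: "ln (real ?N) \<ge> 0" by (intro ln_ge_zero) 
    have "sum (\<lambda>orb. ln (real (card orb))) (orbits_r F n r) \<le> real (card (orbits_r F n r)) * ln (real ?N)"
    proof (rule sum_bounded_above)
      fix ob assume "ob \<in> orbits_r F n r"
      then obtain x where x: "x \<in> unitsS F n" "ob = orbit_r F n r x" unfolding orbits_r_def by blast
      have "1 \<le> card ob" "card ob \<le> ?N" using O.orbit_card_ge[OF x(1)] O.orbit_card_le[OF x(1)] x(2) by auto
      hence h1: "real (card ob) \<le> real ?N" and h2: "real (card ob) > 0"
        by (simp only: of_nat_le_iff, linarith)
      show "ln (real (card ob)) \<le> ln (real ?N)" using h1 h2 by (subst ln_le_cancel_iff) auto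
    qed
    also have "\<dots> \<le> (real Cn * ln (real p) * real q / ln (real q)) * ln (real ?N)"
      using cO lnN0 by (rule mult_right_mono)
    also have "\<dots> \<le> (real Cn * ln (real p) * real q / ln (real q)) * ((1 + A / c0) * ln (ln (real q)))"
    proof (rule mult_left_mono[OF lnNb])
      have "0 \<le> real Cn * ln (real p) * (real q / ln (real q))" using lnp qpos by (intro mult_nonneg_nonneg) auto
      thus "0 \<le> real Cn * ln (real p) * real q / ln (real q)" by simp
    qed
    also have "\<dots> = C * real q * ln (ln (real q)) / ln (real q)" unfolding C_def by simp
    finally show "sum (\<lambda>orb. ln (real (card orb))) (orbits_r F n r)
          \<le> C * real q * ln (ln (real q)) / ln (real q)" .
  qed
qed

end
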